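(* Let $(X,d,\mu)$ be an unbounded space of homogeneous type with geometric constants $\tau$ and $A$, let $0<\gamma<\tfrac1\tau$, $H\geq1$, and let $\mathcal{K}$ be a family of symmetric Markov kernels on $X$ with $\mathcal{K}\subset\mathcal{H}(\gamma,H)$. For $K\in\mathcal{K}$ define $\widetilde K(x,x)=K(x,x)$ and, for $x\neq y$, \[\widetilde K(x,y)=\frac{1}{\mu(B(y,\gamma d(x,y)))}\int_{B(y,\gamma d(x,y))}K(x,z)\,d\mu(z).\] Then for every $K\in\mathcal{K}$ and every $(x,y)\in X\times X$, $K(x,y)\leq H\widetilde K(x,y)\leq H^2K(x,y)$.
   Context: A quasi-distance on $X$ is a nonnegative symmetric function $d$ vanishing exactly on the diagonal with $d(x,z)\leq\tau[d(x,y)+d(y,z)]$, $\tau\geq1$; balls are $B(x,r)=\{y:d(x,y)<r\}$. $(X,d,\mu)$ is a space of homogeneous type if $\mu$ is a positive measure on a $\sigma$-algebra containing all balls with $0<\mu(B(x,2r))\leq A\mu(B(x,r))<\infty$; $\tau,A$ are the geometric constants; unbounded means $\mu(X)=\infty$. A symmetric Markov kernel is a nonnegative symmetric measurable $K$ on $X\times X$ with $\int_XK(x,y)d\mu(y)=1$ for all $x$. $K\in\mathcal{H}(\gamma,H)$ means $\sup_{\eta\in B(y,\gamma d(x,y))}K(x,\eta)\leq H\inf_{\eta\in B(y,\gamma d(x,y))}K(x,\eta)$ for all $x\neq y$. *)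

theory Defs
  imports "HOL-Analysis.Analysis" "HOL-Probability.Probability"
begin

definition quasi_distance :: "'a set \<Rightarrow> ('a \<Rightarrow> 'a \<Rightarrow> real) \<Rightarrow> real \<Rightarrow> bool" where
  "quasi_distance X d \<tau> \<longleftrightarrow> \<tau> \<ge> 1 \<and>
     (\<forall>x\<in>X. \<forall>y\<in>X. d x y \<ge> 0 \<and> d x y = d y x \<and> (d x y = 0 \<longleftrightarrow> x = y)) \<and>
     (\<forall>x\<in>X. \<forall>y\<in>X. \<forall>z\<in>X. d x z \<le> \<tau> * (d x y + d y z))"

definition qball :: "'a set \<Rightarrow> ('a \<Rightarrow> 'a \<Rightarrow> real) \<Rightarrow> 'a \<Rightarrow> real \<Rightarrow> 'a set" where
  "qball X d x r = {y\<in>X. d x y < r}"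

definition homogeneous_type :: "'a measure \<Rightarrow> ('a \<Rightarrow> 'a \<Rightarrow> real) \<Rightarrow> real \<Rightarrow> real \<Rightarrow> bool" where
  "homogeneous_type M d \<tau> A \<longleftrightarrow> quasi_distance (space M) d \<tau> \<and>
     (\<forall>x\<in>space M. \<forall>r. qball (space M) d x r \<in> sets M) \<and>
     (\<forall>x\<in>space M. \<forall>r>0.
        0 < emeasure M (qball (space M) d x (2*r)) \<and>
        emeasure M (qball (space M) d x (2*r)) \<le> ennreal A * emeasure M (qball (space M) d x r) \<and>
        emeasure M (qball (space M) d x r) < \<infinity>)"

definition unbounded_space :: "'a measure \<Rightarrow> bool" where
  "unbounded_space M \<longleftrightarrow> emeasure M (space M) = \<infinity>"

definition symmetric_markov_kernel :: "'a measure \<Rightarrow> ('a \<Rightarrow> 'a \<Rightarrow> real) \<Rightarrow> bool" where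
  "symmetric_markov_kernel M K \<longleftrightarrow>
     (\<lambda>(x,y). K x y) \<in> borel_measurable (M \<Otimes>\<^sub>M M) \<and>
     (\<forall>x\<in>space M. \<forall>y\<in>space M. K x y \<ge> 0 \<and> K x y = K y x) \<and>
     (\<forall>x\<in>space M. (\<integral>\<^sup>+ y. ennreal (K x y) \<partial>M) = 1)"

definition kernel_class_H :: "'a measure \<Rightarrow> ('a \<Rightarrow> 'a \<Rightarrow> real) \<Rightarrow> real \<Rightarrow> real \<Rightarrow> ('a \<Rightarrow> 'a \<Rightarrow> real) \<Rightarrow> bool" where
  "kernel_class_H M d \<gamma> H K \<longleftrightarrow>
     (\<forall>x\<in>space M. \<forall>y\<in>space M. x \<noteq> y \<longrightarrow>
        (SUP \<eta>\<in>qball (space M) d y (\<gamma> * d x y). ereal (K x \<eta>))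
          \<le> ereal H * (INF \<eta>\<in>qball (space M) d y (\<gamma> * d x y). ereal (K x \<eta>)))"

definition Ktilde :: "'a measure \<Rightarrow> ('a \<Rightarrow> 'a \<Rightarrow> real) \<Rightarrow> real \<Rightarrow> ('a \<Rightarrow> 'a \<Rightarrow> real) \<Rightarrow> 'a \<Rightarrow> 'a \<Rightarrow> real" where
  "Ktilde M d \<gamma> K x y =
     (if x = y then K x x
      else (1 / measure M (qball (space M) d y (\<gamma> * d x y))) *
           (LINT z:qball (space M) d y (\<gamma> * d x y)|M. K x z))"

end

theory Submission
  imports Defs
begin

lemma avg_bounds:
  fixes f :: "'a \<Rightarrow> real"
  assumes B: "B \<in> sets M" and fin: "emeasure M B < \<infinity>" and pos: "0 < emeasure M B"
    and fm: "f \<in> borel_measurable M"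
    and lo: "\<And>z. z \<in> B \<Longrightarrow> c \<le> f z" and hi: "\<And>z. z \<in> B \<Longrightarrow> f z \<le> C"
    and c0: "0 \<le> c"
  shows "c \<le> (1 / measure M B) * (LINT z:B|M. f z) \<and> (1 / measure M B) * (LINT z:B|M. f z) \<le> C"
proof -
  have fin': "emeasure M B \<noteq> \<infinity>" using fin by simp
  have mpos: "measure M B > 0" using fin pos
  proof -
    have "emeasure M B = ennreal (measure M B)" using fin by (simp add: emeasure_eq_ennreal_measure less_top)
    with pos have "0 < ennreal (measure M B)" by simp
    then show ?thesis by (simp add: ennreal_less_zero_iff)
  qed
  have ic: "set_integrable M B (\<lambda>_. d)" for d :: real
    unfolding set_integrable_def
    using B fin' by (simp add: integrable_real_indicator less_top)
  have If: "set_integrable M B f"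
    apply (rule set_integrable_bound[OF ic[of C]])
    using fm B unfolding set_borel_measurable_def apply measurable
    apply (rule AE_I2)
    using lo hi c0 by force
  have "c * measure M B \<le> (LINT z:B|M. f z)"
    using set_integral_mono[OF ic[of c] If] lo set_integral_const[OF B fin', of c]
    by (simp add: mult.commute)
  moreover have "(LINT z:B|M. f z) \<le> C * measure M B"
    using set_integral_mono[OF If ic[of C]] hi set_integral_const[OF B fin', of C]
    by (simp add: mult.commute)
  ultimately show ?thesis using mpos by (simp add: field_simps)
qed

theorem lemma4p2:
  fixes M :: "'a measure" and d :: "'a \<Rightarrow> 'a \<Rightarrow> real" and \<tau> A \<gamma> H :: real
    and \<K> :: "('a \<Rightarrow> 'a \<Rightarrow> real) set"
  assumes "homogeneous_type M d \<tau> A"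
    and "unbounded_space M"
    and "0 < \<gamma>" and "\<gamma> < 1 / \<tau>"
    and "H \<ge> 1"
    and "\<forall>K\<in>\<K>. symmetric_markov_kernel M K"
    and "\<forall>K\<in>\<K>. kernel_class_H M d \<gamma> H K"
  shows "\<forall>K\<in>\<K>. \<forall>x\<in>space M. \<forall>y\<in>space M.
           K x y \<le> H * Ktilde M d \<gamma> K x y \<and> H * Ktilde M d \<gamma> K x y \<le> H\<^sup>2 * K x y"
proof (intro ballI)
  fix K x y assume K: "K \<in> \<K>" and x: "x \<in> space M" and y: "y \<in> space M"
  have sm: "symmetric_markov_kernel M K" using K assms(6) by blast
  have kh: "kernel_class_H M d \<gamma> H K" using K assms(7) by blast
  have nonneg: "\<And>a b. a \<in> space M \<Longrightarrow> b \<in> space M \<Longrightarrow> K a b \<ge> 0"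
    using sm unfolding symmetric_markov_kernel_def by blast
  have qd: "quasi_distance (space M) d \<tau>" using assms(1) unfolding homogeneous_type_def by blast
  have dprops: "\<forall>a\<in>space M. \<forall>b\<in>space M. d a b \<ge> 0 \<and> d a b = d b a \<and> (d a b = 0 \<longleftrightarrow> a = b)"
    using qd unfolding quasi_distance_def by (elim conjE)
  have hprops: "\<forall>a\<in>space M. \<forall>r. qball (space M) d a r \<in> sets M"
    "\<forall>a\<in>space M. \<forall>r>0.
        0 < emeasure M (qball (space M) d a (2*r)) \<and>
        emeasure M (qball (space M) d a (2*r)) \<le> ennreal A * emeasure M (qball (space M) d a r) \<and>
        emeasure M (qball (space M) d a r) < \<infinity>"
    using assms(1) unfolding homogeneous_type_def by simp_all
  show "K x y \<le> H * Ktilde M d \<gamma> K x y \<and> H * Ktilde M d \<gamma> K x y \<le> H\<^sup>2 * K x y"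
  proof (cases "x = y")
    case True
    have k0: "K x x \<ge> 0" using nonneg x by blast
    have kt: "Ktilde M d \<gamma> K x y = K x x" using True by (simp add: Ktilde_def)
    have 1: "K x x \<le> H * K x x" using k0 assms(5) mult_right_mono[of 1 H "K x x"] by simp
    have 2: "H * K x x \<le> H * (H * K x x)" using 1 assms(5) by (simp add: mult_left_mono)
    show ?thesis using 1 2 kt True by (simp add: power2_eq_square mult.assoc)
  next
    case False
    define r where "r = \<gamma> * d x y"
    define B where "B = qball (space M) d y r"
    have "d x y \<ge> 0" "d x y \<noteq> 0" using dprops x y False by auto
    then have dpos: "d x y > 0" by simp
    have rpos: "r > 0" using dpos assms(3) by (simp add: r_def)
    have "d y y = 0" using dprops y by simp
    then have yB: "y \<in> B" using y rpos unfolding B_def qball_def by simp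
    have Bsp: "B \<subseteq> space M" unfolding B_def qball_def by auto
    have Bs: "B \<in> sets M" using hprops(1) y unfolding B_def by blast
    have fin: "emeasure M B < \<infinity>" using hprops(2) y rpos unfolding B_def by blast
    have pos: "0 < emeasure M B"
    proof -
      have "r/2 > 0" using rpos by simp
      then have "0 < emeasure M (qball (space M) d y (2*(r/2)))"
        using hprops(2) y by blast
      then show ?thesis by (simp add: B_def)
    qed
    have cmp: "K x a \<le> H * K x b" if a: "a \<in> B" and b: "b \<in> B" for a b
    proof -
      have "ereal (K x a) \<le> (SUP \<eta>\<in>B. ereal (K x \<eta>))" using a by (rule SUP_upper)
      also have "\<dots> \<le> ereal H * (INF \<eta>\<in>B. ereal (K x \<eta>))"
      proof -
        have "\<forall>x\<in>space M. \<forall>y\<in>space M. x \<noteq> y \<longrightarrow>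
          (SUP \<eta>\<in>qball (space M) d y (\<gamma> * d x y). ereal (K x \<eta>))
          \<le> ereal H * (INF \<eta>\<in>qball (space M) d y (\<gamma> * d x y). ereal (K x \<eta>))"
          using kh unfolding kernel_class_H_def .
        then show ?thesis using x y False unfolding B_def r_def by blast
      qed
      also have "\<dots> \<le> ereal H * ereal (K x b)"
        apply (rule ereal_mult_left_mono)
        using b apply (rule INF_lower)
        using assms(5) by simp
      finally show ?thesis by simp
    qed
    have fm: "K x \<in> borel_measurable M"
    proof -
      have "(\<lambda>(a,b). K a b) \<in> borel_measurable (M \<Otimes>\<^sub>M M)"
        using sm unfolding symmetric_markov_kernel_def by blast
      then have "(\<lambda>(a,b). K a b) \<circ> (\<lambda>z. (x, z)) \<in> borel_measurable M"
        using measurable_Pair1'[OF x, of M] by (rule measurable_comp[rotated])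
      then show ?thesis by (simp add: o_def)
    qed
    have Hpos: "H > 0" using assms(5) by simp
    have lo: "K x y / H \<le> K x z" if "z \<in> B" for z
      using cmp[OF yB that] Hpos by (simp add: field_simps)
    have hi: "K x z \<le> H * K x y" if "z \<in> B" for z using cmp[OF that yB] .
    have c0: "0 \<le> K x y / H" using nonneg[OF x y] Hpos by simp
    have kt: "Ktilde M d \<gamma> K x y = (1 / measure M B) * (LINT z:B|M. K x z)"
      using False by (simp add: Ktilde_def B_def r_def)
    from avg_bounds[OF Bs fin pos fm lo hi c0] kt
    have "K x y / H \<le> Ktilde M d \<gamma> K x y" "Ktilde M d \<gamma> K x y \<le> H * K x y" by auto
    then show ?thesis using Hpos
      by (auto simp: field_simps power2_eq_square)
  qed
qed

end
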